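(* Let $\bar y\in[0,1]^M$ with $\sum_{j=1}^M \bar y_j = p$, and for each $i\in[N]$ let $\tilde k_i$ be as defined in the context. Then for every $i\in[N]$ the vector $\bar v_i=(\bar v_i^1,\dots,\bar v_i^{K_i})$ given by $$\bar v_i^k=\begin{cases} D_i^{\tilde k_i+1}-D_i^k & \text{if } k\le \tilde k_i,\\ 0 & \text{otherwise},\end{cases}\qquad k\in[K_i],$$ is an optimal solution of $(DSP_i(\bar y))$, and its objective value equals the optimal value of $(SP_i(\bar y))$.
   Context: Data: clients $i\in[N]$, candidate sites $j\in[M]$ (where $[n]=\{1,\dots,n\}$), nonnegative distances $d_{ij}$, and an integer $p$ with $1\le p\le M$. For each client $i$, let $K_i$ be the number of distinct values among $\{d_{ij}: j\in[M]\}$ and let $D_i^1<\dots<D_i^{K_i}$ be these distinct values sorted increasingly. For $\bar y\in[0,1]^M$, the sub-problem $(SP_i(\bar y))$ is the linear program in variables $z_i^1,\dots,z_i^{K_i}$: minimize $D_i^1+\sum_{k=1}^{K_i-1}(D_i^{k+1}-D_i^k)z_i^k$ subject to $z_i^1\ge 1-\sum_{j:d_{ij}=D_i^1}\bar y_j$; $z_i^k-z_i^{k-1}\ge -\sum_{j:d_{ij}=D_i^k}\bar y_j$ for $k=2,\dots,K_i$; $z_i^k\ge 0$ for $k\in[K_i]$. Its dual $(DSP_i(\bar y))$ is the linear program in variables $v_i^1,\dots,v_i^{K_i}$: maximize $D_i^1+v_i^1\big(1-\sum_{j:d_{ij}=D_i^1}\bar y_j\big)-\sum_{k=2}^{K_i}v_i^k\sum_{j:d_{ij}=D_i^k}\bar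 y_j$ subject to $v_i^k-v_i^{k+1}\le D_i^{k+1}-D_i^k$ for $k\in[K_i-1]$; $v_i^k\ge 0$ for $k\in[K_i]$. Index $\tilde k_i$: $\tilde k_i=0$ if $\sum_{j:d_{ij}=D_i^1}\bar y_j\ge 1$; otherwise $\tilde k_i=\max\{k\in[K_i]: 1-\sum_{j:d_{ij}\le D_i^k}\bar y_j>0\}$. *)

theory Defs
  imports Complex_Main
begin

text \<open>Sites are indexed by {1..M}; d i j is the distance from client i to site j.
  D d M i k is the k-th smallest distinct distance (k = 1..K d M i) of client i.\<close>

definition K :: "(nat \<Rightarrow> nat \<Rightarrow> real) \<Rightarrow> nat \<Rightarrow> nat \<Rightarrow> nat" where
  "K d M i = card (d i ` {1..M})"

definition D :: "(nat \<Rightarrow> nat \<Rightarrow> real) \<Rightarrow> nat \<Rightarrow> nat \<Rightarrow> nat \<Rightarrow> real" where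
  "D d M i k = sorted_list_of_set (d i ` {1..M}) ! (k - 1)"

definition S :: "(nat \<Rightarrow> nat \<Rightarrow> real) \<Rightarrow> nat \<Rightarrow> (nat \<Rightarrow> real) \<Rightarrow> nat \<Rightarrow> nat \<Rightarrow> real" where
  "S d M y i k = (\<Sum>j\<in>{j\<in>{1..M}. d i j = D d M i k}. y j)"

definition SP_feasible :: "(nat \<Rightarrow> nat \<Rightarrow> real) \<Rightarrow> nat \<Rightarrow> (nat \<Rightarrow> real) \<Rightarrow> nat \<Rightarrow> (nat \<Rightarrow> real) \<Rightarrow> bool" where
  "SP_feasible d M y i z \<longleftrightarrow>
     z 1 \<ge> 1 - S d M y i 1 \<and>
     (\<forall>k\<in>{2..K d M i}. z k - z (k - 1) \<ge> - S d M y i k) \<and>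
     (\<forall>k\<in>{1..K d M i}. z k \<ge> 0)"

definition SP_obj :: "(nat \<Rightarrow> nat \<Rightarrow> real) \<Rightarrow> nat \<Rightarrow> nat \<Rightarrow> (nat \<Rightarrow> real) \<Rightarrow> real" where
  "SP_obj d M i z = D d M i 1 +
     (\<Sum>k\<in>{1..K d M i - 1}. (D d M i (k + 1) - D d M i k) * z k)"

definition DSP_feasible :: "(nat \<Rightarrow> nat \<Rightarrow> real) \<Rightarrow> nat \<Rightarrow> nat \<Rightarrow> (nat \<Rightarrow> real) \<Rightarrow> bool" where
  "DSP_feasible d M i v \<longleftrightarrow>
     (\<forall>k\<in>{1..K d M i - 1}. v k - v (k + 1) \<le> D d M i (k + 1) - D d M i k) \<and>
     (\<forall>k\<in>{1..K d M i}. v k \<ge> 0)"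

definition DSP_obj :: "(nat \<Rightarrow> nat \<Rightarrow> real) \<Rightarrow> nat \<Rightarrow> (nat \<Rightarrow> real) \<Rightarrow> nat \<Rightarrow> (nat \<Rightarrow> real) \<Rightarrow> real" where
  "DSP_obj d M y i v = D d M i 1 + v 1 * (1 - S d M y i 1)
     - (\<Sum>k\<in>{2..K d M i}. v k * S d M y i k)"

definition ktilde :: "(nat \<Rightarrow> nat \<Rightarrow> real) \<Rightarrow> nat \<Rightarrow> (nat \<Rightarrow> real) \<Rightarrow> nat \<Rightarrow> nat" where
  "ktilde d M y i =
     (if S d M y i 1 \<ge> 1 then 0
      else Max {k\<in>{1..K d M i}. 1 - (\<Sum>j\<in>{j\<in>{1..M}. d i j \<le> D d M i k}. y j) > 0})"

definition vbar :: "(nat \<Rightarrow> nat \<Rightarrow> real) \<Rightarrow> nat \<Rightarrow> (nat \<Rightarrow> real) \<Rightarrow> nat \<Rightarrow> nat \<Rightarrow> real" where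
  "vbar d M y i k =
     (if k \<le> ktilde d M y i then D d M i (ktilde d M y i + 1) - D d M i k else 0)"

end

theory Submission
  imports Defs
begin

lemma telesc:
  fixes v z :: "nat \<Rightarrow> real"
  shows "v 1 * z 1 + (\<Sum>k\<in>{2..n+1}. v k * (z k - z (k-1)))
     = (\<Sum>k\<in>{1..n}. (v k - v (k+1)) * z k) + v (n+1) * z (n+1)"
proof (induction n)
  case 0
  then show ?case by simp
next
  case (Suc n)
  have "v 1 * z 1 + (\<Sum>k\<in>{2..Suc n+1}. v k * (z k - z (k-1)))
     = v 1 * z 1 + (\<Sum>k\<in>{2..n+1}. v k * (z k - z (k-1))) + v (n+2) * (z (n+2) - z (n+1))"
    by (simp add: sum.cl_ivl_Suc)
  also have "\<dots> = (\<Sum>k\<in>{1..n}. (v k - v (k+1)) * z k) + v (n+1) * z (n+1) + v (n+2) * (z (n+2) - z (n+1))"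
    using Suc by simp
  also have "\<dots> = (\<Sum>k\<in>{1..Suc n}. (v k - v (k+1)) * z k) + v (Suc n+1) * z (Suc n+1)"
    by (simp add: sum.cl_ivl_Suc algebra_simps)
  finally show ?case .
qed

theorem proposition1:
  fixes N M p :: nat and d :: "nat \<Rightarrow> nat \<Rightarrow> real" and y :: "nat \<Rightarrow> real" and i :: nat
  assumes d_nonneg: "\<And>i j. i \<in> {1..N} \<Longrightarrow> j \<in> {1..M} \<Longrightarrow> d i j \<ge> 0"
    and p_bounds: "1 \<le> p" "p \<le> M"
    and y_range: "\<And>j. j \<in> {1..M} \<Longrightarrow> 0 \<le> y j \<and> y j \<le> 1"
    and y_sum: "(\<Sum>j\<in>{1..M}. y j) = real p"
    and i_in: "i \<in> {1..N}"
  shows "DSP_feasible d M i (vbar d M y i)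
    \<and> (\<forall>v. DSP_feasible d M i v \<longrightarrow> DSP_obj d M y i v \<le> DSP_obj d M y i (vbar d M y i))
    \<and> (\<exists>z. SP_feasible d M y i z \<and> SP_obj d M i z = DSP_obj d M y i (vbar d M y i))
    \<and> (\<forall>z. SP_feasible d M y i z \<longrightarrow> DSP_obj d M y i (vbar d M y i) \<le> SP_obj d M i z)"
proof -
  define A where "A = d i ` {1..M}"
  define L where "L = sorted_list_of_set A"
  define KK where "KK = K d M i"
  define DD where "DD = D d M i"
  define SS where "SS = S d M y i"
  define C where "C k = (\<Sum>j\<in>{j\<in>{1..M}. d i j \<le> DD k}. y j)" for k
  define kt where "kt = ktilde d M y i"
  have finA: "finite A" unfolding A_def by simp
  have neA: "A \<noteq> {}" using p_bounds unfolding A_def by auto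
  have lenL: "length L = KK" unfolding L_def KK_def K_def A_def by simp
  have "KK = card A" unfolding KK_def K_def A_def by simp
  then have KK1: "KK \<ge> 1" using finA neA by (simp add: Suc_le_eq card_gt_0_iff)
  have setL: "set L = A" unfolding L_def using finA by simp
  have strict: "sorted_wrt (<) L" unfolding L_def by simp
  have DDnth: "\<And>k. DD k = L ! (k-1)" unfolding DD_def D_def L_def A_def by simp
  have Dmono: "\<And>k l. 1 \<le> k \<Longrightarrow> k < l \<Longrightarrow> l \<le> KK \<Longrightarrow> DD k < DD l"
  proof -
    fix k l :: nat assume "1 \<le> k" "k < l" "l \<le> KK"
    then show "DD k < DD l" unfolding DDnth
      using sorted_wrt_nth_less[OF strict, of "k-1" "l-1"] lenL by simp
  qed
  have Dle: "\<And>k l. 1 \<le> k \<Longrightarrow> k \<le> l \<Longrightarrow> l \<le> KK \<Longrightarrow> DD k \<le> DD l"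
    using Dmono by (metis le_less order.strict_implies_order)
  have Dall: "\<And>j. j \<in> {1..M} \<Longrightarrow> \<exists>k\<in>{1..KK}. d i j = DD k"
  proof -
    fix j assume "j \<in> {1..M}"
    then have "d i j \<in> set L" using setL unfolding A_def by auto
    then obtain n where "n < length L" "L ! n = d i j" by (metis in_set_conv_nth)
    then show "\<exists>k\<in>{1..KK}. d i j = DD k" using lenL DDnth
      by (intro bexI[of _ "n+1"]) auto
  qed
  have ge1: "\<And>j. j \<in> {1..M} \<Longrightarrow> DD 1 \<le> d i j"
  proof -
    fix j assume "j \<in> {1..M}"
    then obtain k where "k \<in> {1..KK}" "d i j = DD k" using Dall by blast
    then show "DD 1 \<le> d i j" using Dle[of 1 k] by simp
  qed
  have leK: "\<And>j. j \<in> {1..M} \<Longrightarrow> d i j \<le> DD KK"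
  proof -
    fix j assume "j \<in> {1..M}"
    then obtain k where "k \<in> {1..KK}" "d i j = DD k" using Dall by blast
    then show "d i j \<le> DD KK" using Dle[of k KK] by simp
  qed
  have ynn: "\<And>j. j \<in> {1..M} \<Longrightarrow> 0 \<le> y j" using y_range by blast
  have SSnn: "\<And>k. SS k \<ge> 0" unfolding SS_def S_def DD_def
    by (rule sum_nonneg) (use ynn in auto)
  have C1: "C 1 = SS 1"
  proof -
    have "{j\<in>{1..M}. d i j \<le> DD 1} = {j\<in>{1..M}. d i j = DD 1}"
      using ge1 by force
    then show ?thesis unfolding C_def SS_def S_def DD_def by simp
  qed
  have Crec: "\<And>k. 2 \<le> k \<Longrightarrow> k \<le> KK \<Longrightarrow> C k = C (k-1) + SS k"
  proof -
    fix k :: nat assume k: "2 \<le> k" "k \<le> KK"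
    have lt: "DD (k-1) < DD k" using Dmono[of "k-1" k] k by simp
    have eq: "{j\<in>{1..M}. d i j \<le> DD k} = {j\<in>{1..M}. d i j \<le> DD (k-1)} \<union> {j\<in>{1..M}. d i j = DD k}"
    proof (rule set_eqI, rule iffI)
      fix j assume j: "j \<in> {j\<in>{1..M}. d i j \<le> DD k}"
      show "j \<in> {j\<in>{1..M}. d i j \<le> DD (k-1)} \<union> {j\<in>{1..M}. d i j = DD k}"
      proof (cases "d i j = DD k")
        case True then show ?thesis using j by auto
      next
        case False
        have jm: "j \<in> {1..M}" using j by simp
        obtain l where l: "l \<in> {1..KK}" "d i j = DD l" using Dall[OF jm] by blast
        have "\<not> k \<le> l"
        proof
          assume "k \<le> l"
          then have "DD k \<le> DD l" using Dle[of k l] k l by simp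
          then show False using False j l by auto
        qed
        then have "DD l \<le> DD (k-1)" using Dle[of l "k-1"] l k by simp
        then show ?thesis using j l by auto
      qed
    qed (use lt in auto)
    have "C k = (\<Sum>j\<in>{j\<in>{1..M}. d i j \<le> DD (k-1)}. y j) + (\<Sum>j\<in>{j\<in>{1..M}. d i j = DD k}. y j)"
      unfolding C_def eq by (rule sum.union_disjoint) (use lt in auto)
    then show "C k = C (k-1) + SS k" unfolding C_def SS_def S_def DD_def by simp
  qed
  have CK: "C KK = real p"
  proof -
    have "{j\<in>{1..M}. d i j \<le> DD KK} = {1..M}" using leK by auto
    then show ?thesis unfolding C_def using y_sum by simp
  qed
  have Cmono: "\<And>k l. 1 \<le> k \<Longrightarrow> k \<le> l \<Longrightarrow> l \<le> KK \<Longrightarrow> C k \<le> C l"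
  proof -
    fix k l :: nat assume kl: "1 \<le> k" "k \<le> l" "l \<le> KK"
    have "DD k \<le> DD l" using Dle kl by simp
    then show "C k \<le> C l" unfolding C_def
      by (intro sum_mono2) (use ynn in auto)
  qed
  have kt_eq: "kt = (if SS 1 \<ge> 1 then 0 else Max {k\<in>{1..KK}. 1 - C k > 0})"
    unfolding kt_def ktilde_def SS_def C_def KK_def DD_def by simp
  have ktK: "kt < KK" and ktlow: "\<And>k. 1 \<le> k \<Longrightarrow> k \<le> kt \<Longrightarrow> C k < 1"
    and kthigh: "C (kt+1) \<ge> 1"
  proof -
    have "kt < KK \<and> (\<forall>k. 1 \<le> k \<longrightarrow> k \<le> kt \<longrightarrow> C k < 1) \<and> C (kt+1) \<ge> 1"
    proof (cases "SS 1 \<ge> 1")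
      case True
      then have "kt = 0" using kt_eq by simp
      then show ?thesis using True C1 KK1 by simp
    next
      case False
      define Q where "Q = {k\<in>{1..KK}. 1 - C k > 0}"
      have kq: "kt = Max Q" using False kt_eq Q_def by simp
      have fQ: "finite Q" unfolding Q_def by simp
      have "1 \<in> Q" using False C1 KK1 unfolding Q_def by simp
      then have neQ: "Q \<noteq> {}" by auto
      have ktQ: "kt \<in> Q" using kq Max_in[OF fQ neQ] by simp
      have "KK \<notin> Q" using CK p_bounds unfolding Q_def by simp
      then have lt: "kt < KK" using ktQ unfolding Q_def by (auto simp: le_less)
      have "kt + 1 \<notin> Q" using Max_ge[OF fQ, of "kt+1"] kq by auto
      then have h: "C (kt+1) \<ge> 1" using lt unfolding Q_def by simp
      have "\<forall>k. 1 \<le> k \<longrightarrow> k \<le> kt \<longrightarrow> C k < 1"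
      proof (intro allI impI)
        fix k assume "1 \<le> k" "k \<le> kt"
        then have "C k \<le> C kt" using Cmono lt by simp
        moreover have "C kt < 1" using ktQ unfolding Q_def by simp
        ultimately show "C k < 1" by simp
      qed
      then show ?thesis using lt h by simp
    qed
    then show "kt < KK" "\<And>k. 1 \<le> k \<Longrightarrow> k \<le> kt \<Longrightarrow> C k < 1" "C (kt+1) \<ge> 1" by auto
  qed
  define vb where "vb k = (if k \<le> kt then DD (kt+1) - DD k else 0)" for k
  define zs where "zs k = (if k \<le> kt then 1 - C k else 0)" for k
  have vb_eq: "vbar d M y i = vb"
    unfolding vb_def vbar_def kt_def DD_def by (rule ext) simp
  have DSPf: "\<And>v. DSP_feasible d M i v \<longleftrightarrow> (\<forall>k\<in>{1..KK-1}. v k - v(k+1) \<le> DD(k+1) - DD k) \<and> (\<forall>k\<in>{1..KK}. v k \<ge> 0)"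
    unfolding DSP_feasible_def KK_def DD_def by simp
  have SPf: "\<And>z. SP_feasible d M y i z \<longleftrightarrow> z 1 \<ge> 1 - SS 1 \<and> (\<forall>k\<in>{2..KK}. z k - z (k - 1) \<ge> - SS k) \<and> (\<forall>k\<in>{1..KK}. z k \<ge> 0)"
    unfolding SP_feasible_def KK_def SS_def by simp
  have SPo: "\<And>z. SP_obj d M i z = DD 1 + (\<Sum>k\<in>{1..KK - 1}. (DD (k + 1) - DD k) * z k)"
    unfolding SP_obj_def KK_def DD_def by simp
  have DSPo: "\<And>v. DSP_obj d M y i v = DD 1 + v 1 * (1 - SS 1) - (\<Sum>k\<in>{2..KK}. v k * SS k)"
    unfolding DSP_obj_def KK_def DD_def SS_def by simp
  obtain n where n: "KK = n + 1" using KK1 by (metis Suc_eq_plus1 Suc_le_D One_nat_def)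
  have weak: "\<And>v z. DSP_feasible d M i v \<Longrightarrow> SP_feasible d M y i z \<Longrightarrow>
       DSP_obj d M y i v \<le> SP_obj d M i z + v KK * z KK"
  proof -
    fix v z assume fv: "DSP_feasible d M i v" and fz: "SP_feasible d M y i z"
    have v1: "\<forall>k\<in>{1..KK-1}. v k - v(k+1) \<le> DD(k+1) - DD k" and v2: "\<forall>k\<in>{1..KK}. v k \<ge> 0"
      using fv DSPf by auto
    have z1: "z 1 \<ge> 1 - SS 1" and z2: "\<forall>k\<in>{2..KK}. z k - z (k - 1) \<ge> - SS k"
      and z3: "\<forall>k\<in>{1..KK}. z k \<ge> 0" using fz SPf by auto
    have a: "v 1 * (1 - SS 1) \<le> v 1 * z 1" using v2 KK1 z1 by (simp add: mult_left_mono)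
    have b: "(\<Sum>k\<in>{2..KK}. v k * (z k - z (k-1))) \<ge> (\<Sum>k\<in>{2..KK}. v k * (- SS k))"
    proof (rule sum_mono)
      fix k assume k: "k \<in> {2..KK}"
      then have "v k \<ge> 0" "z k - z (k-1) \<ge> - SS k" using v2 z2 by auto
      then show "v k * (- SS k) \<le> v k * (z k - z (k-1))" by (rule mult_left_mono[rotated])
    qed
    have c: "(\<Sum>k\<in>{1..KK-1}. (v k - v (k+1)) * z k) \<le> (\<Sum>k\<in>{1..KK-1}. (DD (k + 1) - DD k) * z k)"
    proof (rule sum_mono)
      fix k assume k: "k \<in> {1..KK-1}"
      then have "z k \<ge> 0" "v k - v (k+1) \<le> DD (k + 1) - DD k" using v1 z3 by auto
      then show "(v k - v (k+1)) * z k \<le> (DD (k + 1) - DD k) * z k" by (rule mult_right_mono[rotated])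
    qed
    have "DSP_obj d M y i v = DD 1 + v 1 * (1 - SS 1) + (\<Sum>k\<in>{2..KK}. v k * (- SS k))"
      using DSPo by (simp add: sum_negf)
    also have "\<dots> \<le> DD 1 + (v 1 * z 1 + (\<Sum>k\<in>{2..KK}. v k * (z k - z (k-1))))" using a b by simp
    also have "\<dots> = DD 1 + (\<Sum>k\<in>{1..KK-1}. (v k - v (k+1)) * z k) + v KK * z KK"
      using telesc[of v z n] n by simp
    also have "\<dots> \<le> SP_obj d M i z + v KK * z KK" using c SPo by simp
    finally show "DSP_obj d M y i v \<le> SP_obj d M i z + v KK * z KK" .
  qed
  have fvb: "DSP_feasible d M i vb"
    unfolding DSPf
  proof (intro conjI ballI)
    fix k assume k: "k \<in> {1..KK-1}"
    show "vb k - vb (k+1) \<le> DD (k+1) - DD k"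
    proof (cases "k \<le> kt")
      case True
      show ?thesis
      proof (cases "k+1 \<le> kt")
        case True2: True then show ?thesis unfolding vb_def using True by auto
      next
        case False then have "k = kt" using True by simp
        then show ?thesis unfolding vb_def by simp
      qed
    next
      case False then show ?thesis unfolding vb_def using Dle[of k "k+1"] k by auto
    qed
  next
    fix k assume "k \<in> {1..KK}"
    then show "vb k \<ge> 0" unfolding vb_def using Dle[of k "kt+1"] ktK by auto
  qed
  have fzs: "SP_feasible d M y i zs"
    unfolding SPf
  proof (intro conjI ballI)
    show "zs 1 \<ge> 1 - SS 1"
    proof (cases "1 \<le> kt")
      case True then show ?thesis unfolding zs_def using C1 by simp
    next
      case False then have "kt = 0" by simp
      then have "\<not> (SS 1 < 1)" using ktlow kthigh C1 by simp
      then show ?thesis unfolding zs_def using False by simp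
    qed
  next
    fix k assume k: "k \<in> {2..KK}"
    show "zs k - zs (k-1) \<ge> - SS k"
    proof -
      consider "k \<le> kt" | "k = kt + 1" | "k > kt + 1" by linarith
      then show ?thesis
      proof cases
        case 1 then show ?thesis unfolding zs_def using Crec[of k] k by auto
      next
        case 2 then show ?thesis unfolding zs_def using kthigh Crec[of k] k by auto
      next
        case 3 then show ?thesis unfolding zs_def using SSnn[of k] by auto
      qed
    qed
  next
    fix k assume "k \<in> {1..KK}"
    then show "zs k \<ge> 0" unfolding zs_def using ktlow[of k] by auto
  qed
  have eqv: "DSP_obj d M y i vb = SP_obj d M i zs"
  proof -
    have a: "vb 1 * (1 - SS 1) = vb 1 * zs 1"
      unfolding vb_def zs_def using C1 by auto
    have b: "(\<Sum>k\<in>{2..KK}. vb k * (zs k - zs (k-1))) = (\<Sum>k\<in>{2..KK}. vb k * (- SS k))"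
    proof (rule sum.cong)
      fix k assume k: "k \<in> {2..KK}"
      show "vb k * (zs k - zs (k-1)) = vb k * (- SS k)"
      proof (cases "k \<le> kt")
        case True then show ?thesis unfolding zs_def using Crec[of k] k by auto
      next
        case False then show ?thesis unfolding vb_def by simp
      qed
    qed simp
    have c: "(\<Sum>k\<in>{1..KK-1}. (vb k - vb (k+1)) * zs k) = (\<Sum>k\<in>{1..KK-1}. (DD (k + 1) - DD k) * zs k)"
    proof (rule sum.cong)
      fix k assume k: "k \<in> {1..KK-1}"
      show "(vb k - vb (k+1)) * zs k = (DD (k + 1) - DD k) * zs k"
      proof (cases "k \<le> kt")
        case True
      show ?thesis
      proof (cases "k+1 \<le> kt")
        case True2: True then show ?thesis unfolding vb_def using True by auto
      next
        case False then have "k = kt" using True by simp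
        then show ?thesis unfolding vb_def by simp
      qed
      next
        case False then show ?thesis unfolding zs_def by simp
      qed
    qed simp
    have d: "vb KK * zs KK = 0" unfolding vb_def using ktK by simp
    have "DSP_obj d M y i vb = DD 1 + vb 1 * (1 - SS 1) + (\<Sum>k\<in>{2..KK}. vb k * (- SS k))"
      using DSPo by (simp add: sum_negf)
    also have "\<dots> = DD 1 + (vb 1 * zs 1 + (\<Sum>k\<in>{2..KK}. vb k * (zs k - zs (k-1))))" using a b by simp
    also have "\<dots> = DD 1 + (\<Sum>k\<in>{1..KK-1}. (vb k - vb (k+1)) * zs k) + vb KK * zs KK"
      using telesc[of vb zs n] n by simp
    also have "\<dots> = SP_obj d M i zs" using c d SPo by simp
    finally show ?thesis .
  qed
  have zsK: "zs KK = 0" unfolding zs_def using ktK by simp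
  have vbK: "vb KK = 0" unfolding vb_def using ktK by simp
  show ?thesis unfolding vb_eq
  proof (intro conjI allI impI)
    show "DSP_feasible d M i vb" by (rule fvb)
  next
    fix v assume "DSP_feasible d M i v"
    then show "DSP_obj d M y i v \<le> DSP_obj d M y i vb" using weak[OF _ fzs] zsK eqv by simp
  next
    show "\<exists>z. SP_feasible d M y i z \<and> SP_obj d M i z = DSP_obj d M y i vb"
      using fzs eqv by auto
  next
    fix z assume "SP_feasible d M y i z"
    then show "DSP_obj d M y i vb \<le> SP_obj d M i z" using weak[OF fvb] vbK by simp
  qed
qed

end
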